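(* Let $k\ge 2$ and $n_0=2^{k+1}-1$. Let $T(n)=(3n+1)/2^{v_2(3n+1)}$ be the Syracuse map, $n_i=T^i(n_0)$ and $v_i=v_2(3n_{i-1}+1)$. Then $v_1=\cdots=v_k=1$, $n_k=2\cdot 3^k-1$, and $$v_{k+1}=\begin{cases}2 & \text{if } k \text{ is even},\\ 3+v_2(k+1) & \text{if } k \text{ is odd}.\end{cases}$$ In particular $v_{k+1}\ge 2$ always, and $v_{k+1}\ge 4$ whenever $k$ is odd.
   Context: $v_2$ is the $2$-adic valuation; $T^i$ the $i$-th iterate. *)

theory Defs
  imports "HOL-Computational_Algebra.Primes"
begin

abbreviation v2 :: "nat \<Rightarrow> nat" where
  "v2 m \<equiv> multiplicity (2::nat) m"

definition syracuse :: "nat \<Rightarrow> nat" where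
  "syracuse n = (3 * n + 1) div 2 ^ v2 (3 * n + 1)"

end

theory Submission imports Defs begin

lemma v2_eq: "odd (b::nat) \<Longrightarrow> v2 (2^j * b) = j"
proof -
  assume b: "odd b"
  hence "b \<noteq> 0" by presburger
  hence "v2 (2^j * b) = v2 (2^j) + v2 b"
    by (intro prime_elem_multiplicity_mult_distrib) auto
  moreover have "v2 b = 0" using b by (intro not_dvd_imp_multiplicity_0) auto
  ultimately show ?thesis by simp
qed

lemma v2_mod4: "(x::nat) mod 4 = 2 \<Longrightarrow> v2 x = 1"
proof -
  assume h: "x mod 4 = 2"
  have "x = 2 * (x div 2)" using h by presburger
  hence e: "x = 2^1 * (x div 2)" by simp
  have "odd (x div 2)" using h by presburger
  hence "v2 (2^1 * (x div 2)) = 1" by (rule v2_eq)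
  thus ?thesis using e by simp
qed

lemma v2_mod8: "(x::nat) mod 8 = 4 \<Longrightarrow> v2 x = 2"
proof -
  assume h: "x mod 8 = 4"
  have "x = 4 * (x div 4)" using h by presburger
  hence e: "x = 2^2 * (x div 4)" by simp
  have "odd (x div 4)" using h by presburger
  hence "v2 (2^2 * (x div 4)) = 2" by (rule v2_eq)
  thus ?thesis using e by simp
qed

lemma pow3_even_mod4: "(3::nat)^(2*c) mod 4 = 1"
proof -
  have "(3::nat)^(2*c) = (3^2)^c" by (rule power_mult)
  hence "(3::nat)^(2*c) = 9^c" by simp
  moreover have "(9::nat)^c mod 4 = (9 mod 4)^c mod 4" by (rule power_mod[symmetric])
  ultimately show ?thesis by simp
qed

lemma pow3_odd_mod8: "odd b \<Longrightarrow> (3::nat)^b mod 8 = 3"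
proof -
  assume "odd b"
  then obtain c where b: "b = 2*c+1" by (metis oddE)
  have "(3::nat)^(2*c) = (3^2)^c" by (rule power_mult)
  hence X: "(3::nat)^b = 3 * 9^c" by (simp add: b)
  have "(9::nat)^c mod 8 = (9 mod 8)^c mod 8" by (rule power_mod[symmetric])
  hence Y: "(9::nat)^c mod 8 = 1" by simp
  have "(3 * 9^c) mod 8 = (3 * ((9::nat)^c mod 8)) mod 8" by (rule mod_mult_right_eq[symmetric])
  thus ?thesis unfolding X Y by simp
qed

lemma mod83: assumes "(y::nat) mod 8 = 3" shows "(y - 1) mod 4 = 2"
proof -
  have "y mod 8 + y div 8 * 8 = y" by (rule mod_div_mult_eq)
  hence E: "y - 1 = 2 + (2 * (y div 8)) * 4" using assms by linarith
  show ?thesis unfolding E mod_mult_self1 by simp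
qed

lemma v2_odd_exp: "odd b \<Longrightarrow> v2 ((3::nat)^b - 1) = 1"
proof -
  assume "odd b"
  hence "(3::nat)^b mod 8 = 3" by (rule pow3_odd_mod8)
  hence "((3::nat)^b - 1) mod 4 = 2" using mod83 by blast
  thus ?thesis by (rule v2_mod4)
qed

lemma sq_minus: "(y::nat) \<ge> 1 \<Longrightarrow> y*y - 1 = (y-1)*(y+1)"
  by (cases y) (auto simp: algebra_simps)

lemma sq_v2_a: assumes "(y::nat) mod 4 = 1" "y \<ge> 2" shows "v2 (y*y - 1) = v2 (y-1) + 1"
proof -
  have e: "y*y - 1 = (y-1)*(y+1)" using assms(2) sq_minus by simp
  have "y - 1 \<noteq> 0" using assms(2) by simp
  moreover have "v2 (y+1) = 1" using assms(1) by (intro v2_mod4) presburger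
  moreover have "y + 1 \<noteq> 0" by simp
  ultimately have M: "v2 ((y-1)*(y+1)) = v2 (y-1) + v2 (y+1)"
    by (intro prime_elem_multiplicity_mult_distrib) auto
  show ?thesis unfolding e M using \<open>v2 (y+1) = 1\<close> by (simp only:)
qed

lemma sq_v2_b: assumes "(y::nat) mod 8 = 3" shows "v2 (y*y - 1) = 3"
proof -
  have "y mod 8 + y div 8 * 8 = y" by (rule mod_div_mult_eq)
  hence Y: "y = 3 + (y div 8) * 8" using assms by linarith
  hence y: "y \<ge> 1" by linarith
  have e: "y*y - 1 = (y-1)*(y+1)" using y sq_minus by simp
  have "(y - 1) mod 4 = 2" using assms by (rule mod83)
  hence "v2 (y-1) = 1" by (rule v2_mod4)
  have Z: "y + 1 = 4 + (y div 8) * 8" using Y by linarith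
  have "(y + 1) mod 8 = 4" unfolding Z mod_mult_self1 by simp
  hence "v2 (y+1) = 2" by (rule v2_mod8)
  have "y - 1 \<noteq> 0" using \<open>(y - 1) mod 4 = 2\<close> by auto
  moreover have "y + 1 \<noteq> 0" by simp
  ultimately have M: "v2 ((y-1)*(y+1)) = v2 (y-1) + v2 (y+1)"
    by (intro prime_elem_multiplicity_mult_distrib) auto
  show ?thesis unfolding e M using \<open>v2 (y+1) = 2\<close> \<open>v2 (y-1) = 1\<close> by simp
qed

lemma lte_pow: assumes "a \<ge> 1" "odd b" shows "v2 ((3::nat)^(2^a*b) - 1) = a + 2"
  using assms(1)
proof (induction a rule: dec_induct)
  case base
  have "(3::nat)^(2^1*b) = 3^b*3^b"
    by (metis power_add mult_2 power_one_right)
  moreover have "v2 (3^b*3^b - 1) = 3"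
    by (rule sq_v2_b) (rule pow3_odd_mod8[OF assms(2)])
  ultimately show ?case by simp
next
  case (step a)
  have "(2::nat)^(Suc a)*b = 2^a*b + 2^a*b" by simp
  hence P: "(3::nat)^(2^(Suc a)*b) = 3^(2^a*b)*3^(2^a*b)"
    by (metis power_add)
  have E: "2^a*b = 2*(2^(a-1)*b)" using step(1) by (cases a) auto
  have m: "(3::nat)^(2^a*b) mod 4 = 1" unfolding E by (rule pow3_even_mod4)
  have "b > 0" using assms(2) by presburger
  hence "1 \<le> 2^a*b" by simp
  hence "(3::nat)^1 \<le> 3^(2^a*b)" by (rule power_increasing) simp
  hence g: "(3::nat)^(2^a*b) \<ge> 2" by simp
  have "v2 ((3::nat)^(2^(Suc a)*b) - 1) = v2 ((3::nat)^(2^a*b) - 1) + 1"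
    unfolding P by (rule sq_v2_a[OF m g])
  thus ?case using step.IH by simp
qed

lemma syr_aux: "3 * (2^(j+2)*3^i - 1) + 1 = 2^1 * (2^(j+1)*3^(i+1) - 1::nat)"
    "odd (2^(j+1)*3^(i+1) - 1::nat)"
proof -
  define P :: nat where "P = 2^(j+1)*3^i"
  have P1: "P \<ge> 1" unfolding P_def by simp
  have a: "2^(j+2)*3^i = 2*P" unfolding P_def by simp
  have b: "2^(j+1)*3^(i+1) = 3*P" unfolding P_def by simp
  have "even P" unfolding P_def by simp
  show "3 * (2^(j+2)*3^i - 1) + 1 = 2^1 * (2^(j+1)*3^(i+1) - 1::nat)"
    unfolding a b using P1 by simp
  show "odd (2^(j+1)*3^(i+1) - 1::nat)" unfolding b using P1 \<open>even P\<close> by presburger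
qed

lemma syr_v2: "v2 (3 * (2^(j+2)*3^i - 1) + 1) = 1"
  unfolding syr_aux(1) using syr_aux(2) by (rule v2_eq)

lemma syr_step: "syracuse (2^(j+2)*3^i - 1) = 2^(j+1)*3^(i+1) - 1"
  unfolding syracuse_def syr_v2 unfolding syr_aux(1) by simp

lemma iter: "i \<le> k \<Longrightarrow> (syracuse^^i) (2^(k+1)-1) = 2^(k+1-i)*3^i - 1"
proof (induction i)
  case 0 then show ?case by simp
next
  case (Suc i)
  hence e: "k+1-i = (k-i-1)+2" "k+1 - Suc i = (k-i-1)+1" by auto
  have "(syracuse^^Suc i) (2^(k+1)-1) = syracuse ((syracuse^^i) (2^(k+1)-1))" by simp
  also have "\<dots> = syracuse (2^(k+1-i)*3^i - 1)" using Suc by simp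
  also have "\<dots> = syracuse (2^((k-i-1)+2)*3^i - 1)" by (simp only: e)
  also have "\<dots> = 2^(k+1 - Suc i)*3^(Suc i) - 1" unfolding syr_step e by simp
  finally show ?case .
qed

lemma T1: "3 * (2*3^k - 1) + 1 = 2 * (3^(k+1) - 1::nat)"
proof -
  have t1: "(3::nat)^k \<ge> 1" by simp
  have t2: "(3::nat)^(k+1) = 3*3^k" by simp
  show ?thesis unfolding t2 using t1 by linarith
qed

lemma T2: "v2 (2 * (3^(k+1) - 1)) = Suc (v2 (3^(k+1) - 1))"
proof -
  have t1: "(3::nat)^k \<ge> 1" by simp
  have t3: "Suc 0 < 3*(3::nat)^k" using t1 by linarith
  show ?thesis by (rule multiplicity_times_same) (use t3 in simp_all)
qed

lemma T3: "even k \<Longrightarrow> Suc (v2 (3^(k+1) - 1)) = 2"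
  using v2_odd_exp[of "k+1"] by simp

lemma T4: assumes "odd k" shows "Suc (v2 (3^(k+1) - 1)) = 3 + v2 (k+1)"
proof -
  define a where "a = v2 (k+1)"
  obtain b where b: "k+1 = 2^a * b" "\<not> 2 dvd b"
    by (rule multiplicity_decompose'[where x="k+1" and p="2::nat", folded a_def]) simp_all
  have "a \<noteq> 0"
  proof
    assume "a = 0"
    then have "k + 1 = b" using b(1) by simp
    then show False using assms b(2) by auto
  qed
  hence "v2 (3^(2^a * b) - 1) = a + 2"
    using b(2) by (intro lte_pow) auto
  hence "v2 (3^(k+1) - 1) = a + 2" by (simp only: b(1))
  then show ?thesis unfolding a_def by simp
qed

lemma final_v2: "v2 (3 * (2*3^k - 1) + 1) = (if even k then 2 else 3 + v2 (k + 1))"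
  unfolding T1 T2 using T3 T4 by simp

theorem mainTheorem15:
  fixes k :: nat
  assumes "k \<ge> 2"
  defines "n0 \<equiv> 2 ^ (k + 1) - 1"
  shows "(\<forall>i\<in>{1..k}. v2 (3 * (syracuse ^^ (i - 1)) n0 + 1) = 1)
       \<and> (syracuse ^^ k) n0 = 2 * 3 ^ k - 1
       \<and> v2 (3 * (syracuse ^^ k) n0 + 1) =
           (if even k then 2 else 3 + v2 (k + 1))
       \<and> v2 (3 * (syracuse ^^ k) n0 + 1) \<ge> 2
       \<and> (odd k \<longrightarrow> v2 (3 * (syracuse ^^ k) n0 + 1) \<ge> 4)"
proof -
  have A: "\<forall>i\<in>{1..k}. v2 (3 * (syracuse ^^ (i - 1)) n0 + 1) = 1"
  proof
    fix i assume i: "i \<in> {1..k}"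
    hence "(syracuse ^^ (i - 1)) n0 = 2^(k+1-(i-1))*3^(i-1) - 1"
      unfolding n0_def by (intro iter) auto
    moreover have "k+1-(i-1) = (k-i)+2" using i by auto
    ultimately have "(syracuse ^^ (i - 1)) n0 = 2^((k-i)+2)*3^(i-1) - 1" by metis
    then show "v2 (3 * (syracuse ^^ (i - 1)) n0 + 1) = 1"
      using syr_v2[of "k-i" "i-1"] by (simp only:)
  qed
  have B: "(syracuse ^^ k) n0 = 2 * 3 ^ k - 1"
    unfolding n0_def using iter[of k k] by simp
  have C: "v2 (3 * (syracuse ^^ k) n0 + 1) = (if even k then 2 else 3 + v2 (k + 1))"
    unfolding B by (rule final_v2)
  have D: "odd k \<longrightarrow> v2 (k+1) > 0" by (auto simp: multiplicity_gt_zero_iff)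
  show ?thesis using A B C D by (simp add: Suc_le_eq)
qed

end
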